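(* Let $\mathcal E$ be a nest on a complex Banach space $X$ and let $\mathcal J$ be a $\mathcal T(\mathcal E)$-bimodule. Then for every $E\in\mathcal E$ the subspace $[\mathcal J E]$ belongs to $\mathcal E$, and the map $\Phi_{\mathcal J}:\mathcal E\to\mathcal E$, $E\mapsto[\mathcal JE]$, is an admissible support function on $\mathcal E$.
   Context: A nest $\mathcal E$ on $X$ is a family of closed linear subspaces of $X$, totally ordered by inclusion, containing $\{0\}$ and $X$, closed under arbitrary meets $\wedge$ (intersections) and joins $\vee$ (norm-closed linear spans of unions). For $E\in\mathcal E$, $E_-=\vee\{F\in\mathcal E: F\subsetneq E\}$. $\mathcal T(\mathcal E)=\{T\in\mathcal B(X): TE\subseteq E\ \forall E\in\mathcal E\}$ is the nest algebra. A $\mathcal T(\mathcal E)$-bimodule is a linear subspace $\mathcal J\subseteq\mathcal B(X)$ with $\mathcal T(\mathcal E)\mathcal J\subseteq\mathcal J$ and $\mathcal J\mathcal T(\mathcal E)\subseteq\mathcal J$. $[\mathcal JE]$ is the norm-closed linear span of $\{Tx: T\in\mathcal J, x\in E\}$. A support function on $\mathcal E$ is an inclusion-preserving map $\Phi:\mathcal E\to\mathcal E$; it is admissible if for every $N\in\mathcal E\setminus\{\{0\}\}$, $\vee_{E\in\mathcal E, E\subsetneq N}\Phi(E)=\Phi(N_-)$. *)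

theory Defs
  imports "HOL-Analysis.Analysis"
begin

text \<open>Complex Banach spaces: a real Banach space carrying a compatible complex
scalar multiplication (the distribution has no complex-vector-space class).\<close>

class complex_banach = banach +
  fixes scaleC :: "complex \<Rightarrow> 'a \<Rightarrow> 'a" (infixr "*\<^sub>C" 75)
  assumes scaleC_add_right: "a *\<^sub>C (x + y) = a *\<^sub>C x + a *\<^sub>C y"
    and scaleC_add_left: "(a + b) *\<^sub>C x = a *\<^sub>C x + b *\<^sub>C x"
    and scaleC_scaleC: "a *\<^sub>C (b *\<^sub>C x) = (a * b) *\<^sub>C x"
    and scaleC_one: "1 *\<^sub>C x = x"
    and scaleR_scaleC: "scaleR r x = (complex_of_real r) *\<^sub>C x"
    and norm_scaleC: "norm (a *\<^sub>C x) = cmod a * norm x"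

definition csubspace :: "'a::complex_banach set \<Rightarrow> bool" where
  "csubspace S \<longleftrightarrow> 0 \<in> S \<and> (\<forall>x\<in>S. \<forall>y\<in>S. x + y \<in> S) \<and> (\<forall>c. \<forall>x\<in>S. c *\<^sub>C x \<in> S)"

definition cspan :: "'a::complex_banach set \<Rightarrow> 'a set" where
  "cspan S = \<Inter>{V. csubspace V \<and> S \<subseteq> V}"

definition closed_span :: "'a::complex_banach set \<Rightarrow> 'a set" where
  "closed_span S = closure (cspan S)"

definition join :: "'a::complex_banach set set \<Rightarrow> 'a set" where
  "join F = closed_span (\<Union>F)"

definition bounded_ops :: "('a::complex_banach \<Rightarrow> 'a) set" where
  "bounded_ops = {T. bounded_linear T \<and> (\<forall>c x. T (c *\<^sub>C x) = c *\<^sub>C T x)}"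

definition nest :: "'a::complex_banach set set \<Rightarrow> bool" where
  "nest \<E> \<longleftrightarrow>
     (\<forall>E\<in>\<E>. closed E \<and> csubspace E) \<and>
     (\<forall>E\<in>\<E>. \<forall>F\<in>\<E>. E \<subseteq> F \<or> F \<subseteq> E) \<and>
     {0} \<in> \<E> \<and> UNIV \<in> \<E> \<and>
     (\<forall>\<F>. \<F> \<subseteq> \<E> \<longrightarrow> \<Inter>\<F> \<in> \<E>) \<and>
     (\<forall>\<F>. \<F> \<subseteq> \<E> \<longrightarrow> join \<F> \<in> \<E>)"

definition pred_elem :: "'a::complex_banach set set \<Rightarrow> 'a set \<Rightarrow> 'a set" where
  "pred_elem \<E> E = join {F \<in> \<E>. F \<subset> E}"

definition nest_algebra :: "'a::complex_banach set set \<Rightarrow> ('a \<Rightarrow> 'a) set" where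
  "nest_algebra \<E> = {T \<in> bounded_ops. \<forall>E\<in>\<E>. T ` E \<subseteq> E}"

definition bimodule :: "'a::complex_banach set set \<Rightarrow> ('a \<Rightarrow> 'a) set \<Rightarrow> bool" where
  "bimodule \<E> \<J> \<longleftrightarrow>
     \<J> \<subseteq> bounded_ops \<and>
     (\<lambda>x. 0) \<in> \<J> \<and>
     (\<forall>S\<in>\<J>. \<forall>T\<in>\<J>. (\<lambda>x. S x + T x) \<in> \<J>) \<and>
     (\<forall>c. \<forall>T\<in>\<J>. (\<lambda>x. c *\<^sub>C T x) \<in> \<J>) \<and>
     (\<forall>A\<in>nest_algebra \<E>. \<forall>T\<in>\<J>. A \<circ> T \<in> \<J> \<and> T \<circ> A \<in> \<J>)"

text \<open>[J E]: the norm-closed linear span of {T x. T in J, x in E}.\<close>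
definition range_on :: "('a::complex_banach \<Rightarrow> 'a) set \<Rightarrow> 'a set \<Rightarrow> 'a set" where
  "range_on \<J> E = closed_span {T x | T x. T \<in> \<J> \<and> x \<in> E}"

definition support_function :: "'a::complex_banach set set \<Rightarrow> ('a set \<Rightarrow> 'a set) \<Rightarrow> bool" where
  "support_function \<E> \<Phi> \<longleftrightarrow>
     (\<forall>E\<in>\<E>. \<Phi> E \<in> \<E>) \<and> (\<forall>E\<in>\<E>. \<forall>F\<in>\<E>. E \<subseteq> F \<longrightarrow> \<Phi> E \<subseteq> \<Phi> F)"

definition admissible :: "'a::complex_banach set set \<Rightarrow> ('a set \<Rightarrow> 'a set) \<Rightarrow> bool" where
  "admissible \<E> \<Phi> \<longleftrightarrow> support_function \<E> \<Phi> \<and>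
     (\<forall>N\<in>\<E>. N \<noteq> {0} \<longrightarrow> join (\<Phi> ` {E \<in> \<E>. E \<subset> N}) = \<Phi> (pred_elem \<E> N))"

end

theory Submission
  imports Defs
begin


lemma scaleC_zero_left[simp]: "(0::complex) *\<^sub>C x = 0"
  using scaleR_scaleC[of 0 x] by simp

lemma scaleC_of_real: "complex_of_real r *\<^sub>C x = r *\<^sub>R x"
  by (simp add: scaleR_scaleC)

lemma scaleC_zero_right[simp]: "c *\<^sub>C (0::'a::complex_banach) = 0"
proof -
  have "c *\<^sub>C (0::'a) = c *\<^sub>C 0 + c *\<^sub>C 0" using scaleC_add_right[of c 0 0] by simp
  then show ?thesis by simp
qed

lemma scaleC_minus_right: "c *\<^sub>C (- x::'a::complex_banach) = - (c *\<^sub>C x)"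
proof -
  have "c *\<^sub>C (- x) + c *\<^sub>C x = 0" using scaleC_add_right[of c "-x" x] by simp
  then show ?thesis by (simp add: eq_neg_iff_add_eq_0)
qed

lemma scaleC_diff_right: "c *\<^sub>C (x - y::'a::complex_banach) = c *\<^sub>C x - c *\<^sub>C y"
  using scaleC_add_right[of c x "-y"] by (simp add: scaleC_minus_right)

lemma scaleC_scaleR_comm: "c *\<^sub>C (r *\<^sub>R x) = r *\<^sub>R (c *\<^sub>C (x::'a::complex_banach))"
  by (simp add: scaleR_scaleC scaleC_scaleC mult.commute)

lemma bounded_linear_scaleC: "bounded_linear (\<lambda>x::'a::complex_banach. c *\<^sub>C x)"
proof (rule bounded_linear_intro[where K="cmod c"])
  show "\<And>x y. c *\<^sub>C (x + y) = c *\<^sub>C x + c *\<^sub>C y" by (rule scaleC_add_right)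
  show "\<And>r x. c *\<^sub>C (r *\<^sub>R x) = r *\<^sub>R (c *\<^sub>C x)" by (rule scaleC_scaleR_comm)
  show "\<And>x. norm (c *\<^sub>C x) \<le> norm x * cmod c" by (simp add: norm_scaleC)
qed

lemma scaleC_decomp: "c *\<^sub>C x = Re c *\<^sub>R x + Im c *\<^sub>R (\<i> *\<^sub>C (x::'a::complex_banach))"
proof -
  have "c = complex_of_real (Re c) + complex_of_real (Im c) * \<i>" by (simp add: complex_eq_iff)
  then have "c *\<^sub>C x = complex_of_real (Re c) *\<^sub>C x + (complex_of_real (Im c) * \<i>) *\<^sub>C x"
    by (metis scaleC_add_left)
  then show ?thesis by (simp add: scaleR_scaleC scaleC_scaleC)
qed

lemma csubspace_iff: "csubspace S \<longleftrightarrow> subspace S \<and> (\<forall>x\<in>S. \<i> *\<^sub>C x \<in> S)"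
proof
  assume "csubspace S" then show "subspace S \<and> (\<forall>x\<in>S. \<i> *\<^sub>C x \<in> S)"
    unfolding csubspace_def subspace_def by (metis scaleR_scaleC)
next
  assume a: "subspace S \<and> (\<forall>x\<in>S. \<i> *\<^sub>C x \<in> S)"
  show "csubspace S" unfolding csubspace_def
  proof (intro conjI ballI allI)
    show "0 \<in> S" using a by (simp add: subspace_0)
    show "x + y \<in> S" if "x \<in> S" "y \<in> S" for x y using a that by (simp add: subspace_add)
    show "c *\<^sub>C x \<in> S" if "x \<in> S" for c x
      using a that by (subst scaleC_decomp) (simp add: subspace_add subspace_scale)
  qed
qed

lemma closure_add_closed:
  assumes "\<forall>x\<in>S. \<forall>y\<in>S. x + y \<in> S" "x \<in> closure S" "y \<in> closure (S::'a::real_normed_vector set)"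
  shows "x + y \<in> closure S"
proof -
  obtain f where f: "\<forall>n. f n \<in> S" "f \<longlonglongrightarrow> x" using assms(2) unfolding closure_sequential by blast
  obtain g where g: "\<forall>n. g n \<in> S" "g \<longlonglongrightarrow> y" using assms(3) unfolding closure_sequential by blast
  have "(\<lambda>n. f n + g n) \<longlonglongrightarrow> x + y" using f g by (intro tendsto_add) auto
  moreover have "\<forall>n. f n + g n \<in> S" using f g assms(1) by auto
  ultimately show ?thesis unfolding closure_sequential by (intro exI[of _ "\<lambda>n. f n + g n"]) simp
qed

lemma csubspace_closure: "csubspace S \<Longrightarrow> csubspace (closure S)"
proof -
  assume S: "csubspace S"
  have sc: "(\<lambda>x. c *\<^sub>C x) ` closure S \<subseteq> closure S" for c
  proof (rule image_closure_subset)
    show "continuous_on (closure S) (\<lambda>x. c *\<^sub>C x)"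
      using bounded_linear_scaleC linear_continuous_on by blast
    show "(\<lambda>x. c *\<^sub>C x) ` S \<subseteq> closure S" using S closure_subset unfolding csubspace_def by blast
  qed simp
  show ?thesis unfolding csubspace_def
  proof (intro conjI ballI allI)
    show "0 \<in> closure S" using S closure_subset unfolding csubspace_def by blast
    show "x + y \<in> closure S" if "x \<in> closure S" "y \<in> closure S" for x y
      using closure_add_closed[OF _ that] S unfolding csubspace_def by blast
    show "c *\<^sub>C x \<in> closure S" if "x \<in> closure S" for c x using sc that by blast
  qed
qed

lemma csubspace_cspan: "csubspace (cspan S)"
  unfolding cspan_def csubspace_def by auto

lemma cspan_superset: "S \<subseteq> cspan S"
  unfolding cspan_def by auto

lemma cspan_minimal: "S \<subseteq> V \<Longrightarrow> csubspace V \<Longrightarrow> cspan S \<subseteq> V"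
  unfolding cspan_def by auto

lemma closed_closed_span: "closed (closed_span S)"
  unfolding closed_span_def by simp

lemma csubspace_closed_span: "csubspace (closed_span S)"
  unfolding closed_span_def by (simp add: csubspace_closure csubspace_cspan)

lemma closed_span_superset: "S \<subseteq> closed_span S"
  unfolding closed_span_def using cspan_superset closure_subset by blast

lemma closed_span_minimal: "S \<subseteq> V \<Longrightarrow> csubspace V \<Longrightarrow> closed V \<Longrightarrow> closed_span S \<subseteq> V"
  unfolding closed_span_def by (meson closure_minimal cspan_minimal)

lemma closed_span_mono: "S \<subseteq> V \<Longrightarrow> closed_span S \<subseteq> closed_span V"
  by (meson closed_closed_span closed_span_minimal closed_span_superset csubspace_closed_span order_trans)

lemma bounded_ops_image_closed_span:
  assumes T: "T \<in> bounded_ops"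
  shows "T ` closed_span S \<subseteq> closed_span (T ` S)"
proof -
  have bl: "bounded_linear T" and hom: "\<And>c x. T (c *\<^sub>C x) = c *\<^sub>C T x"
    using T by (auto simp: bounded_ops_def)
  have "csubspace (T -` closed_span (T ` S))"
    using csubspace_closed_span[of "T ` S"] bl hom
    unfolding csubspace_def by (auto simp: linear_simps)
  moreover have "S \<subseteq> T -` closed_span (T ` S)" using closed_span_superset by blast
  ultimately have "cspan S \<subseteq> T -` closed_span (T ` S)" by (simp add: cspan_minimal)
  then have "T ` cspan S \<subseteq> closed_span (T ` S)" by blast
  then show ?thesis unfolding closed_span_def[of S]
    by (intro image_closure_subset) (auto intro: linear_continuous_on bl simp: closed_closed_span)
qed



definition hb_ok :: "real \<Rightarrow> ('a::real_normed_vector \<times> real) set \<Rightarrow> bool" where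
  "hb_ok C G \<longleftrightarrow> subspace G \<and> (\<forall>x a. (x,a)\<in>G \<longrightarrow> a \<le> C * norm x)"

lemma hb_functional:
  assumes "hb_ok C G" "(x,a) \<in> G" "(x,b) \<in> G"
  shows "a = b"
proof -
  have s: "subspace G" and d: "\<And>x a. (x,a)\<in>G \<Longrightarrow> a \<le> C * norm x" using assms(1) by (auto simp: hb_ok_def)
  have "(x,a) - (x,b) \<in> G" "(x,b) - (x,a) \<in> G"
    using subspace_diff[OF s assms(2,3)] subspace_diff[OF s assms(3,2)] by auto
  then have "(0, a - b) \<in> G" "(0, b - a) \<in> G" by auto
  then show ?thesis using d[of 0 "a-b"] d[of 0 "b-a"] by simp
qed

lemma hb_extend_step:
  assumes ok: "hb_ok C G" and C: "C \<ge> 0" and z: "\<forall>a. (z,a) \<notin> G"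
  shows "\<exists>G'. hb_ok C G' \<and> G \<subseteq> G' \<and> G' \<noteq> G"
proof -
  have s: "subspace G" and d: "\<And>x a. (x,a)\<in>G \<Longrightarrow> a \<le> C * norm x" using ok by (auto simp: hb_ok_def)
  have key: "a - C * norm (x - z) \<le> C * norm (y + z) - b" if "(x,a)\<in>G" "(y,b)\<in>G" for x a y b
  proof -
    have "(x,a) + (y,b) \<in> G" using subspace_add[OF s that] .
    then have "a + b \<le> C * norm (x + y)" using d by auto
    also have "norm (x + y) \<le> norm (x - z) + norm (y + z)"
      using norm_triangle_ineq[of "x - z" "y + z"] by simp
    then have "C * norm (x + y) \<le> C * norm (x - z) + C * norm (y + z)"
      using C by (metis distrib_left mult_left_mono)
    finally show ?thesis by simp
  qed
  have G0: "(0,0) \<in> G" using s subspace_0 by (metis zero_prod_def)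
  define L where "L = {a - C * norm (x - z) | x a. (x,a)\<in>G}"
  define c where "c = Sup L"
  have Lne: "L \<noteq> {}" using G0 L_def by blast
  have Lbd: "bdd_above L" unfolding L_def bdd_above_def using key[OF _ G0] by auto
  have c1: "a - C * norm (x - z) \<le> c" if "(x,a)\<in>G" for x a
    unfolding c_def by (rule cSup_upper[OF _ Lbd]) (use that L_def in blast)
  have c2: "c \<le> C * norm (y + z) - b" if "(y,b)\<in>G" for y b
    unfolding c_def by (rule cSup_least[OF Lne]) (use key that L_def in blast)
  define G' where "G' = {(x + t *\<^sub>R z, a + t * c) | x a t. (x,a)\<in>G}"
  have sub: "subspace G'" unfolding subspace_def
  proof (intro conjI ballI allI)
    show "0 \<in> G'" unfolding G'_def using G0 by (auto intro!: exI[of _ 0] simp: zero_prod_def)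
  next
    fix p q assume "p \<in> G'" "q \<in> G'"
    then obtain x a t y b u where p: "p = (x + t *\<^sub>R z, a + t * c)" "(x,a)\<in>G"
      and q: "q = (y + u *\<^sub>R z, b + u * c)" "(y,b)\<in>G" unfolding G'_def by blast
    have "(x,a) + (y,b) \<in> G" using subspace_add[OF s p(2) q(2)] .
    then have "(x + y, a + b) \<in> G" by simp
    moreover have "p + q = ((x + y) + (t + u) *\<^sub>R z, (a + b) + (t + u) * c)"
      using p q by (simp add: algebra_simps scaleR_add_left)
    ultimately show "p + q \<in> G'" unfolding G'_def by blast
  next
    fix r :: real and p assume "p \<in> G'"
    then obtain x a t where p: "p = (x + t *\<^sub>R z, a + t * c)" "(x,a)\<in>G" unfolding G'_def by blast
    have "r *\<^sub>R (x,a) \<in> G" using subspace_scale[OF s p(2)] .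
    then have "(r *\<^sub>R x, r * a) \<in> G" by simp
    moreover have "r *\<^sub>R p = (r *\<^sub>R x + (r * t) *\<^sub>R z, r * a + (r * t) * c)"
      using p by (simp add: algebra_simps scaleR_add_right)
    ultimately show "r *\<^sub>R p \<in> G'" unfolding G'_def by blast
  qed
  have dom: "b \<le> C * norm y" if hyb: "(y,b) \<in> G'" for y b
  proof -
    obtain x a t where yb: "y = x + t *\<^sub>R z" "b = a + t * c" "(x,a)\<in>G"
      using hyb unfolding G'_def by blast
    consider "t = 0" | "t > 0" | "t < 0" by linarith
    then show ?thesis
    proof cases
      case 1 then show ?thesis using d yb by simp
    next
      case 2
      have "(inverse t) *\<^sub>R (x,a) \<in> G" using subspace_scale[OF s yb(3)] .
      then have "c \<le> C * norm (inverse t *\<^sub>R x + z) - inverse t * a" using c2 by simp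
      then have "t * c \<le> t * (C * norm (inverse t *\<^sub>R x + z) - inverse t * a)"
        using 2 by (simp add: mult_left_mono)
      also have "inverse t *\<^sub>R x + z = inverse t *\<^sub>R (x + t *\<^sub>R z)" using 2 by (simp add: scaleR_add_right)
      then have "norm (inverse t *\<^sub>R x + z) = inverse t * norm (x + t *\<^sub>R z)"
        using 2 by simp
      then have "t * (C * norm (inverse t *\<^sub>R x + z) - inverse t * a) = C * norm (x + t *\<^sub>R z) - a"
        using 2 by (simp add: right_diff_distrib mult.left_commute[of t C] mult.assoc[symmetric])
      finally show ?thesis using yb by simp
    next
      case 3
      define s' where "s' = - t"
      have sp: "s' > 0" using 3 s'_def by simp
      have "(inverse s') *\<^sub>R (x,a) \<in> G" using subspace_scale[OF s yb(3)] .
      then have "inverse s' * a - C * norm (inverse s' *\<^sub>R x - z) \<le> c" using c1 by simp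
      then have "s' * (inverse s' * a - C * norm (inverse s' *\<^sub>R x - z)) \<le> s' * c"
        using sp by (simp add: mult_left_mono)
      also have "inverse s' *\<^sub>R x - z = inverse s' *\<^sub>R (x + t *\<^sub>R z)" using sp s'_def by (simp add: scaleR_add_right)
      then have "s' * (inverse s' * a - C * norm (inverse s' *\<^sub>R x - z)) = a - C * norm (x + t *\<^sub>R z)"
        using sp by (simp add: right_diff_distrib mult.left_commute[of s' C] mult.assoc[symmetric])
      finally show ?thesis using yb s'_def by simp
    qed
  qed
  have "hb_ok C G'" using sub dom by (auto simp: hb_ok_def)
  moreover have "G \<subseteq> G'" unfolding G'_def by (force intro: exI[of _ 0])
  moreover have "(z, c) \<in> G'" unfolding G'_def using G0 by (force intro: exI[of _ 1])
  ultimately show ?thesis using z by blast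
qed

lemma hahn_banach_graph:
  assumes ok: "hb_ok C G0" and C: "C \<ge> 0"
  shows "\<exists>U. bounded_linear U \<and> (\<forall>x a. (x,a)\<in>G0 \<longrightarrow> U x = a)"
proof -
  define A where "A = {G. hb_ok C G \<and> G0 \<subseteq> G}"
  have "\<forall>Ch\<in>chains A. \<exists>U\<in>A. \<forall>X\<in>Ch. X \<subseteq> U"
  proof
    fix Ch assume ch: "Ch \<in> chains A"
    show "\<exists>U\<in>A. \<forall>X\<in>Ch. X \<subseteq> U"
    proof (cases "Ch = {}")
      case True then show ?thesis using ok A_def by auto
    next
      case False
      have CA: "Ch \<subseteq> A" using ch chainsD2 by blast
      have sU: "subspace (\<Union>Ch)" unfolding subspace_def
      proof (intro conjI ballI allI)
        obtain X where "X \<in> Ch" using False by blast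
        then show "0 \<in> \<Union>Ch" using CA A_def hb_ok_def subspace_0 by blast
      next
        fix p q assume "p \<in> \<Union>Ch" "q \<in> \<Union>Ch"
        then obtain X Y where XY: "X \<in> Ch" "Y \<in> Ch" "p \<in> X" "q \<in> Y" by blast
        then have "X \<subseteq> Y \<or> Y \<subseteq> X" using chainsD[OF ch] by blast
        then show "p + q \<in> \<Union>Ch" using XY CA unfolding A_def hb_ok_def
          by (metis (no_types, lifting) UnionI mem_Collect_eq subset_eq subspace_add)
      next
        fix r :: real and p assume "p \<in> \<Union>Ch"
        then obtain X where "X \<in> Ch" "p \<in> X" by blast
        then show "r *\<^sub>R p \<in> \<Union>Ch" using CA unfolding A_def hb_ok_def
          by (metis (no_types, lifting) UnionI mem_Collect_eq subset_eq subspace_scale)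
      qed
      have "hb_ok C (\<Union>Ch)" using sU CA unfolding A_def hb_ok_def by blast
      moreover have "G0 \<subseteq> \<Union>Ch" using False CA A_def by blast
      ultimately show ?thesis unfolding A_def by blast
    qed
  qed
  then obtain G where GA: "G \<in> A" and max: "\<forall>X\<in>A. G \<subseteq> X \<longrightarrow> X = G"
    using Zorn_Lemma2[of A] by blast
  have okG: "hb_ok C G" and G0G: "G0 \<subseteq> G" using GA A_def by auto
  have full: "\<exists>a. (z,a) \<in> G" for z
  proof (rule ccontr)
    assume "\<not> (\<exists>a. (z,a) \<in> G)"
    then obtain G' where "hb_ok C G'" "G \<subseteq> G'" "G' \<noteq> G" using hb_extend_step[OF okG C] by blast
    then show False using max G0G A_def by blast
  qed
  define U where "U z = (SOME a. (z,a) \<in> G)" for z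
  have UG: "(z, U z) \<in> G" for z unfolding U_def using full someI_ex by metis
  have Ueq: "(z,a) \<in> G \<Longrightarrow> U z = a" for z a using UG hb_functional[OF okG] by blast
  have s: "subspace G" and d: "\<And>x a. (x,a)\<in>G \<Longrightarrow> a \<le> C * norm x" using okG by (auto simp: hb_ok_def)
  have add: "U (x + y) = U x + U y" for x y
  proof -
    have "(x, U x) + (y, U y) \<in> G" using subspace_add[OF s UG UG] .
    then show ?thesis using Ueq by simp
  qed
  have scl: "U (r *\<^sub>R x) = r * U x" for r x
  proof -
    have "r *\<^sub>R (x, U x) \<in> G" using subspace_scale[OF s UG] .
    then show ?thesis using Ueq by simp
  qed
  have nb: "norm (U x) \<le> norm x * C" for x
  proof -
    have "U x \<le> C * norm x" using d UG by blast
    moreover have "U (-x) \<le> C * norm (-x)" using d UG by blast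
    moreover have "U (-x) = - U x" using scl[of "-1" x] by simp
    ultimately show ?thesis by (simp add: abs_le_iff mult.commute)
  qed
  have "bounded_linear U"
    by (rule bounded_linear_intro[where K=C]) (use add scl nb in auto)
  moreover have "\<forall>x a. (x,a)\<in>G0 \<longrightarrow> U x = a" using G0G Ueq by blast
  ultimately show ?thesis by blast
qed



lemma real_sep:
  fixes x :: "'a::real_normed_vector"
  assumes W: "subspace W" "closed W" and x: "x \<notin> W"
  shows "\<exists>U::'a \<Rightarrow> real. bounded_linear U \<and> U x = 1 \<and> (\<forall>w\<in>W. U w = 0)"
proof -
  define d where "d = infdist x W"
  have W0: "0 \<in> W" using W subspace_0 by blast
  have dpos: "d > 0" using x W W0 in_closed_iff_infdist_zero[of W x] infdist_nonneg[of x W]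
    unfolding d_def by force
  define G0 where "G0 = {(w + t *\<^sub>R x, t) | w t. w \<in> W}"
  have sub: "subspace G0" unfolding subspace_def
  proof (intro conjI ballI allI)
    show "0 \<in> G0" unfolding G0_def using W0 by (auto simp: zero_prod_def intro!: exI[of _ 0])
  next
    fix p q assume "p \<in> G0" "q \<in> G0"
    then obtain w t v u where "p = (w + t *\<^sub>R x, t)" "w \<in> W" "q = (v + u *\<^sub>R x, u)" "v \<in> W"
      unfolding G0_def by blast
    moreover have "p + q = ((w + v) + (t + u) *\<^sub>R x, t + u)" using calculation
      by (simp add: algebra_simps scaleR_add_left)
    ultimately show "p + q \<in> G0" unfolding G0_def using W subspace_add by blast
  next
    fix r :: real and p assume "p \<in> G0"
    then obtain w t where "p = (w + t *\<^sub>R x, t)" "w \<in> W" unfolding G0_def by blast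
    moreover have "r *\<^sub>R p = (r *\<^sub>R w + (r * t) *\<^sub>R x, r * t)" using calculation
      by (simp add: algebra_simps scaleR_add_right)
    ultimately show "r *\<^sub>R p \<in> G0" unfolding G0_def using W subspace_scale by blast
  qed
  have dom: "b \<le> (1/d) * norm y" if h: "(y,b) \<in> G0" for y b
  proof -
    obtain w t where yb: "y = w + t *\<^sub>R x" "b = t" "w \<in> W" using h unfolding G0_def by blast
    show ?thesis
    proof (cases "t > 0")
      case False
      have "0 \<le> (1/d) * norm y" using dpos by simp
      then show ?thesis using yb False by linarith
    next
      case True
      have "- (inverse t *\<^sub>R w) \<in> W" using W yb subspace_neg subspace_scale by blast
      then have "d \<le> dist x (- (inverse t *\<^sub>R w))" unfolding d_def by (rule infdist_le)
      also have "dist x (- (inverse t *\<^sub>R w)) = norm (inverse t *\<^sub>R y)"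
        using True yb by (simp add: dist_norm scaleR_add_right add.commute)
      also have "\<dots> = inverse t * norm y" using True by simp
      finally have "t * d \<le> norm y" using True by (simp add: field_simps)
      then show ?thesis using yb dpos by (simp add: field_simps)
    qed
  qed
  have "hb_ok (1/d) G0" using sub dom by (auto simp: hb_ok_def)
  then obtain U where U: "bounded_linear U" "\<forall>y b. (y,b)\<in>G0 \<longrightarrow> U y = b"
    using hahn_banach_graph[of "1/d" G0] dpos by auto
  have "(x, 1) \<in> G0" unfolding G0_def using W0 by (force intro: exI[of _ 1])
  moreover have "(w, 0) \<in> G0" if "w \<in> W" for w unfolding G0_def using that by force
  ultimately show ?thesis using U by blast
qed

definition cfun :: "('a::complex_banach \<Rightarrow> complex) \<Rightarrow> bool" where
  "cfun f \<longleftrightarrow> (\<forall>a b. f (a + b) = f a + f b) \<and> (\<forall>c z. f (c *\<^sub>C z) = c * f z)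
     \<and> (\<exists>K. \<forall>z. cmod (f z) \<le> K * norm z)"

lemma complex_sep:
  fixes x :: "'a::complex_banach"
  assumes F: "closed F" "csubspace F" and x: "x \<notin> F"
  shows "\<exists>f. cfun f \<and> f x = 1 \<and> (\<forall>v\<in>F. f v = 0)"
proof -
  have sF: "subspace F" and iF: "\<And>v. v \<in> F \<Longrightarrow> \<i> *\<^sub>C v \<in> F" using F csubspace_iff by blast+
  obtain U :: "'a \<Rightarrow> real" where U: "bounded_linear U" "U x = 1" "\<forall>w\<in>F. U w = 0" using real_sep[OF sF F(1) x] by blast
  interpret U: bounded_linear U by (rule U(1))
  obtain K where K: "\<And>z. norm (U z) \<le> norm z * K" using U.bounded by blast
  define f where "f z = complex_of_real (U z) - \<i> * complex_of_real (U (\<i> *\<^sub>C z))" for z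
  have fadd: "f (a + b) = f a + f b" for a b
    unfolding f_def by (simp add: scaleC_add_right U.add algebra_simps)
  have fhom: "f (c *\<^sub>C z) = c * f z" for c z
  proof -
    have e1: "U (c *\<^sub>C z) = Re c * U z + Im c * U (\<i> *\<^sub>C z)"
      by (subst scaleC_decomp) (simp add: U.add U.scale)
    have "U (\<i> *\<^sub>C (c *\<^sub>C z)) = U ((\<i> * c) *\<^sub>C z)" by (simp add: scaleC_scaleC)
    also have "\<dots> = - Im c * U z + Re c * U (\<i> *\<^sub>C z)"
      by (subst scaleC_decomp) (simp add: U.diff U.scale)
    finally have e2: "U (\<i> *\<^sub>C (c *\<^sub>C z)) = - Im c * U z + Re c * U (\<i> *\<^sub>C z)" .
    show ?thesis unfolding f_def e1 e2 by (simp add: complex_eq_iff algebra_simps)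
  qed
  have fb: "cmod (f z) \<le> (2 * K) * norm z" for z
  proof -
    have "cmod (f z) \<le> cmod (complex_of_real (U z)) + cmod (\<i> * complex_of_real (U (\<i> *\<^sub>C z)))"
      unfolding f_def by (rule norm_triangle_ineq4)
    also have "\<dots> = norm (U z) + norm (U (\<i> *\<^sub>C z))" by (simp add: norm_mult)
    also have "\<dots> \<le> norm z * K + norm (\<i> *\<^sub>C z) * K" using K by (intro add_mono) auto
    also have "\<dots> = (2 * K) * norm z" by (simp add: norm_scaleC)
    finally show ?thesis .
  qed
  have fx: "Re (f x) = 1" unfolding f_def using U(2) by simp
  then have fx0: "f x \<noteq> 0" by auto
  define g where "g z = f z / f x" for z
  have "cfun g" unfolding cfun_def g_def
  proof (intro conjI allI exI)
    show "f (a + b) / f x = f a / f x + f b / f x" for a b by (simp add: fadd add_divide_distrib)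
    show "f (c *\<^sub>C z) / f x = c * (f z / f x)" for c z by (simp add: fhom)
    show "cmod (f z / f x) \<le> (2 * K / cmod (f x)) * norm z" for z
      using fb[of z] fx0 by (simp add: norm_divide divide_right_mono)
  qed
  moreover have "g x = 1" using fx0 g_def by simp
  moreover have "\<forall>v\<in>F. g v = 0" unfolding g_def f_def using U(3) iF by simp
  ultimately show ?thesis by blast
qed

lemma rank_one_bounded_ops:
  assumes "cfun f"
  shows "(\<lambda>z. f z *\<^sub>C y) \<in> bounded_ops"
proof -
  have fadd: "\<And>a b. f (a + b) = f a + f b" and fhom: "\<And>c z. f (c *\<^sub>C z) = c * f z"
    using assms by (auto simp: cfun_def)
  obtain K where K: "\<And>z. cmod (f z) \<le> K * norm z" using assms by (auto simp: cfun_def)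
  have "bounded_linear (\<lambda>z. f z *\<^sub>C y)"
  proof (rule bounded_linear_intro[where K="K * norm y"])
    show "f (a + b) *\<^sub>C y = f a *\<^sub>C y + f b *\<^sub>C y" for a b by (simp add: fadd scaleC_add_left)
    show "f (r *\<^sub>R z) *\<^sub>C y = r *\<^sub>R (f z *\<^sub>C y)" for r z
    proof -
      have "f (r *\<^sub>R z) = complex_of_real r * f z" using fhom[of "complex_of_real r" z] scaleR_scaleC[of r z] by simp
      then show ?thesis using scaleC_scaleC[of "complex_of_real r" "f z" y] scaleR_scaleC[of r "f z *\<^sub>C y"] by simp
    qed
    show "norm (f z *\<^sub>C y) \<le> norm z * (K * norm y)" for z
    proof -
      have "norm y * cmod (f z) \<le> norm y * (K * norm z)" using K[of z] by (simp add: mult_left_mono)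
      then show ?thesis by (simp add: norm_scaleC mult.commute mult.left_commute)
    qed
  qed
  moreover have "f (c *\<^sub>C z) *\<^sub>C y = c *\<^sub>C (f z *\<^sub>C y)" for c z using fhom scaleC_scaleC by metis
  ultimately show ?thesis by (simp add: bounded_ops_def)
qed



lemma nestD:
  assumes "nest \<E>"
  shows "\<And>E. E \<in> \<E> \<Longrightarrow> closed E" "\<And>E. E \<in> \<E> \<Longrightarrow> csubspace E"
    "\<And>E F. E \<in> \<E> \<Longrightarrow> F \<in> \<E> \<Longrightarrow> E \<subseteq> F \<or> F \<subseteq> E"
    "\<And>\<F>. \<F> \<subseteq> \<E> \<Longrightarrow> \<Inter>\<F> \<in> \<E>" "\<And>\<F>. \<F> \<subseteq> \<E> \<Longrightarrow> join \<F> \<in> \<E>"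
  using assms unfolding nest_def by blast+

lemma bimodule_sub: "bimodule \<E> \<J> \<Longrightarrow> T \<in> \<J> \<Longrightarrow> T \<in> bounded_ops"
  unfolding bimodule_def by (elim conjE) (erule subsetD)

lemma bimodule_comp: "bimodule \<E> \<J> \<Longrightarrow> A \<in> nest_algebra \<E> \<Longrightarrow> T \<in> \<J> \<Longrightarrow> A \<circ> T \<in> \<J>"
  unfolding bimodule_def by (elim conjE) (drule bspec, assumption, drule bspec, assumption, erule conjunct1)

lemma key_rank_one:
  assumes N: "nest \<E>" and inv: "\<forall>A\<in>nest_algebra \<E>. A ` M \<subseteq> M"
    and x: "x \<in> M" and f: "cfun f" "f x = 1" and F: "\<forall>v\<in>F. f v = 0"
    and y: "\<forall>H\<in>\<E>. \<not> H \<subseteq> F \<longrightarrow> y \<in> H"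
  shows "y \<in> M"
proof -
  define R where "R = (\<lambda>z. f z *\<^sub>C y)"
  have "R \<in> bounded_ops" unfolding R_def using rank_one_bounded_ops[OF f(1)] .
  moreover have "R ` H \<subseteq> H" if H: "H \<in> \<E>" for H
  proof
    fix w assume "w \<in> R ` H"
    then obtain z where z: "z \<in> H" "w = f z *\<^sub>C y" unfolding R_def by blast
    have cs: "csubspace H" using nestD(2)[OF N H] .
    show "w \<in> H"
    proof (cases "H \<subseteq> F")
      case True then have "f z = 0" using F z by blast
      then show ?thesis using z cs unfolding csubspace_def by simp
    next
      case False then have "y \<in> H" using y H by blast
      then show ?thesis using z cs unfolding csubspace_def by blast
    qed
  qed
  ultimately have "R \<in> nest_algebra \<E>" unfolding nest_algebra_def by blast
  then have "R x \<in> M" using inv x by blast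
  then show ?thesis unfolding R_def using f(2) by (simp add: scaleC_one)
qed

lemma claimA:
  assumes N: "nest \<E>" and inv: "\<forall>A\<in>nest_algebra \<E>. A ` M \<subseteq> M"
    and x: "x \<in> M" and H: "H \<in> \<E>" "x \<notin> H"
  shows "H \<subseteq> M"
proof
  fix y assume yH: "y \<in> H"
  obtain f where f: "cfun f" "f x = 1" "\<forall>v\<in>H. f v = 0"
    using complex_sep[OF nestD(1)[OF N H(1)] nestD(2)[OF N H(1)] H(2)] by blast
  have "\<forall>H'\<in>\<E>. \<not> H' \<subseteq> H \<longrightarrow> y \<in> H'" using nestD(3)[OF N H(1)] yH by blast
  then show "y \<in> M" using key_rank_one[OF N inv x f] by blast
qed

lemma invariant_in_nest:
  assumes N: "nest \<E>" and M: "closed M" "csubspace M" and inv: "\<forall>A\<in>nest_algebra \<E>. A ` M \<subseteq> M"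
  shows "M \<in> \<E>"
proof -
  define K where "K = {F\<in>\<E>. F \<subseteq> M}"
  define Nj where "Nj = join K"
  have NjE: "Nj \<in> \<E>" unfolding Nj_def K_def by (rule nestD(5)[OF N]) blast
  have NjM: "Nj \<subseteq> M" unfolding Nj_def join_def K_def by (rule closed_span_minimal) (use M in auto)
  have KNj: "\<Union>K \<subseteq> Nj" unfolding Nj_def join_def by (rule closed_span_superset)
  have "M \<subseteq> Nj"
  proof
    fix x assume xM: "x \<in> M"
    show "x \<in> Nj"
    proof (rule ccontr)
      assume xN: "x \<notin> Nj"
      define Ex where "Ex = \<Inter>{H\<in>\<E>. x \<in> H}"
      have ExE: "Ex \<in> \<E>" unfolding Ex_def by (rule nestD(4)[OF N]) blast
      have xEx: "x \<in> Ex" unfolding Ex_def by blast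
      obtain f where f: "cfun f" "f x = 1" "\<forall>v\<in>Nj. f v = 0"
        using complex_sep[OF nestD(1)[OF N NjE] nestD(2)[OF N NjE] xN] by blast
      have "Ex \<subseteq> M"
      proof
        fix y assume yEx: "y \<in> Ex"
        have "\<forall>H\<in>\<E>. \<not> H \<subseteq> Nj \<longrightarrow> y \<in> H"
        proof (intro ballI impI)
          fix H assume H: "H \<in> \<E>" "\<not> H \<subseteq> Nj"
          show "y \<in> H"
          proof (cases "x \<in> H")
            case True then show ?thesis using yEx H unfolding Ex_def by blast
          next
            case False
            then have "H \<subseteq> M" using claimA[OF N inv xM H(1)] by blast
            then have "H \<in> K" using H K_def by blast
            then show ?thesis using KNj H by blast
          qed
        qed
        then show "y \<in> M" using key_rank_one[OF N inv xM f] by blast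
      qed
      then have "Ex \<in> K" using ExE K_def by blast
      then show False using KNj xEx xN by blast
    qed
  qed
  then have "M = Nj" using NjM by blast
  then show ?thesis using NjE by simp
qed

lemma range_on_invariant:
  assumes B: "bimodule \<E> \<J>" and A: "A \<in> nest_algebra \<E>"
  shows "A ` range_on \<J> E \<subseteq> range_on \<J> E"
proof -
  have Ab: "A \<in> bounded_ops" using A nest_algebra_def by blast
  let ?S = "{T x | T x. T \<in> \<J> \<and> x \<in> E}"
  have "A ` ?S \<subseteq> ?S"
  proof
    fix w assume "w \<in> A ` ?S"
    then obtain T x where "T \<in> \<J>" "x \<in> E" "w = A (T x)" by blast
    moreover have "A \<circ> T \<in> \<J>" using bimodule_comp[OF B A calculation(1)] .
    ultimately show "w \<in> ?S" by (metis (mono_tags, lifting) comp_apply mem_Collect_eq)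
  qed
  then have "closed_span (A ` ?S) \<subseteq> closed_span ?S" by (rule closed_span_mono)
  then show ?thesis unfolding range_on_def using bounded_ops_image_closed_span[OF Ab] by blast
qed

lemma range_on_mono: "E \<subseteq> F \<Longrightarrow> range_on \<J> E \<subseteq> range_on \<J> F"
  unfolding range_on_def by (rule closed_span_mono) blast

lemma closed_span_closed_csub: "closed (closed_span S) \<and> csubspace (closed_span S)"
  by (simp add: closed_closed_span csubspace_closed_span)

lemma range_on_join:
  assumes B: "bimodule \<E> \<J>"
  shows "join (range_on \<J> ` C) = range_on \<J> (join C)"
proof
  have sub1: "\<Union> (range_on \<J> ` C) \<subseteq> range_on \<J> (join C)"
  proof
    fix w assume "w \<in> \<Union> (range_on \<J> ` C)"
    then obtain E where E: "E \<in> C" "w \<in> range_on \<J> E" by blast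
    have "E \<subseteq> \<Union>C" using E(1) by blast
    also have "\<Union>C \<subseteq> join C" unfolding join_def by (rule closed_span_superset)
    finally have "range_on \<J> E \<subseteq> range_on \<J> (join C)" by (rule range_on_mono)
    then show "w \<in> range_on \<J> (join C)" using E(2) by blast
  qed
  show "join (range_on \<J> ` C) \<subseteq> range_on \<J> (join C)"
    unfolding join_def[of "range_on \<J> ` C"]
    by (rule closed_span_minimal[OF sub1]) (simp_all add: range_on_def closed_closed_span csubspace_closed_span)
next
  let ?L = "join (range_on \<J> ` C)"
  have Lc: "closed ?L" "csubspace ?L" unfolding join_def by (rule closed_closed_span, rule csubspace_closed_span)
  have "{T x | T x. T \<in> \<J> \<and> x \<in> join C} \<subseteq> ?L"
  proof
    fix w assume "w \<in> {T x | T x. T \<in> \<J> \<and> x \<in> join C}"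
    then obtain T x where Tx: "T \<in> \<J>" "x \<in> join C" "w = T x" by blast
    have Tb: "T \<in> bounded_ops" using bimodule_sub[OF B Tx(1)] .
    have "T ` \<Union>C \<subseteq> \<Union> (range_on \<J> ` C)"
    proof
      fix v assume "v \<in> T ` \<Union>C"
      then obtain E u where Eu: "E \<in> C" "u \<in> E" "v = T u" by blast
      have "v \<in> {T x | T x. T \<in> \<J> \<and> x \<in> E}" unfolding Eu(3) using Tx(1) Eu(2) by auto
      then have "v \<in> range_on \<J> E" unfolding range_on_def by (rule subsetD[OF closed_span_superset])
      then show "v \<in> \<Union> (range_on \<J> ` C)" using Eu(1) by blast
    qed
    also have "\<dots> \<subseteq> ?L" unfolding join_def by (rule closed_span_superset)
    finally have "closed_span (T ` \<Union>C) \<subseteq> ?L" by (rule closed_span_minimal[OF _ Lc(2) Lc(1)])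
    moreover have "T x \<in> closed_span (T ` \<Union>C)"
    proof -
      have "x \<in> closed_span (\<Union>C)" using Tx(2) unfolding join_def .
      then have "T x \<in> T ` closed_span (\<Union>C)" by (rule imageI)
      then show ?thesis by (rule subsetD[OF bounded_ops_image_closed_span[OF Tb]])
    qed
    ultimately show "w \<in> ?L" using Tx(3) by blast
  qed
  then show "range_on \<J> (join C) \<subseteq> ?L"
    unfolding range_on_def[of _ "join C"] by (rule closed_span_minimal[OF _ Lc(2) Lc(1)])
qed

theorem mainTheorem3:
  fixes \<E> :: "'a::complex_banach set set" and \<J> :: "('a \<Rightarrow> 'a) set"
  assumes "nest \<E>" and "bimodule \<E> \<J>"
  shows "(\<forall>E\<in>\<E>. range_on \<J> E \<in> \<E>) \<and> admissible \<E> (range_on \<J>)"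
proof -
  have inE: "range_on \<J> E \<in> \<E>" for E
  proof (rule invariant_in_nest[OF assms(1)])
    show "closed (range_on \<J> E)" unfolding range_on_def by (rule closed_closed_span)
    show "csubspace (range_on \<J> E)" unfolding range_on_def by (rule csubspace_closed_span)
    show "\<forall>A\<in>nest_algebra \<E>. A ` range_on \<J> E \<subseteq> range_on \<J> E"
      using range_on_invariant[OF assms(2)] by blast
  qed
  have "support_function \<E> (range_on \<J>)"
    unfolding support_function_def using inE range_on_mono by blast
  moreover have "join (range_on \<J> ` {E \<in> \<E>. E \<subset> N}) = range_on \<J> (pred_elem \<E> N)" for N
    unfolding pred_elem_def by (rule range_on_join[OF assms(2)])
  ultimately show ?thesis using inE unfolding admissible_def by blast
qed

end
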